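(* Let $G$ be a fullerene graph with a perfect star packing $S$ of type $P0$. Then $G-C(S)$ contains no cycle of odd length that is a non-facial cycle of $G$.
   Context: A fullerene graph is a finite simple connected (equivalently, $3$-connected) plane cubic graph all of whose faces are pentagons or hexagons. A perfect star packing of $G$ is a spanning subgraph $S$ of $G$ every connected component of which is isomorphic to $K_{1,3}$; $C(S)$ denotes the set of centers (degree-$3$ vertices) of the stars in $S$. $S$ is of type $P0$ if no vertex of $C(S)$ lies on a pentagonal face of $G$. A cycle of $G$ is facial if it bounds a face of $G$, non-facial otherwise. *)

theory Defs
  imports Main
begin

text \<open>Plane embeddings are represented combinatorially by a rotation system rot
(rot v is a cyclic permutation of the neighbours of v); the faces are the
orbits of the face-tracing map on darts, and the embedding is plane (genus 0)
iff Euler's formula V - E + F = 2 holds (the graph being connected).\<close>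

definition neighbours :: "('v \<Rightarrow> 'v \<Rightarrow> bool) \<Rightarrow> 'v \<Rightarrow> 'v set" where
  "neighbours adj v = {u. adj v u}"

definition simple_graph :: "'v set \<Rightarrow> ('v \<Rightarrow> 'v \<Rightarrow> bool) \<Rightarrow> bool" where
  "simple_graph V adj \<longleftrightarrow> finite V \<and> (\<forall>u v. adj u v \<longrightarrow> u \<in> V \<and> v \<in> V \<and> adj v u \<and> u \<noteq> v)"

definition graph_edges :: "('v \<Rightarrow> 'v \<Rightarrow> bool) \<Rightarrow> 'v set set" where
  "graph_edges adj = {{u, v} | u v. adj u v}"

definition connected_graph :: "'v set \<Rightarrow> ('v \<Rightarrow> 'v \<Rightarrow> bool) \<Rightarrow> bool" where
  "connected_graph V adj \<longleftrightarrow> V \<noteq> {} \<and> (\<forall>u\<in>V. \<forall>v\<in>V. (adj\<^sup>*\<^sup>*) u v)"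

definition cubic :: "'v set \<Rightarrow> ('v \<Rightarrow> 'v \<Rightarrow> bool) \<Rightarrow> bool" where
  "cubic V adj \<longleftrightarrow> (\<forall>v\<in>V. card (neighbours adj v) = 3)"

definition rotation_system :: "'v set \<Rightarrow> ('v \<Rightarrow> 'v \<Rightarrow> bool) \<Rightarrow> ('v \<Rightarrow> 'v \<Rightarrow> 'v) \<Rightarrow> bool" where
  "rotation_system V adj rot \<longleftrightarrow>
     (\<forall>v\<in>V. bij_betw (rot v) (neighbours adj v) (neighbours adj v) \<and>
        (\<forall>u\<in>neighbours adj v. \<forall>w\<in>neighbours adj v. \<exists>k. (rot v ^^ k) u = w))"

definition darts :: "('v \<Rightarrow> 'v \<Rightarrow> bool) \<Rightarrow> ('v \<times> 'v) set" where
  "darts adj = {(u, v). adj u v}"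

definition face_step :: "('v \<Rightarrow> 'v \<Rightarrow> 'v) \<Rightarrow> 'v \<times> 'v \<Rightarrow> 'v \<times> 'v" where
  "face_step rot d = (snd d, rot (snd d) (fst d))"

definition face_of :: "('v \<Rightarrow> 'v \<Rightarrow> 'v) \<Rightarrow> 'v \<times> 'v \<Rightarrow> ('v \<times> 'v) set" where
  "face_of rot d = {(face_step rot ^^ n) d | n. True}"

definition faces :: "('v \<Rightarrow> 'v \<Rightarrow> bool) \<Rightarrow> ('v \<Rightarrow> 'v \<Rightarrow> 'v) \<Rightarrow> ('v \<times> 'v) set set" where
  "faces adj rot = face_of rot ` darts adj"

text \<open>Length of a face = number of darts on its boundary walk; vertices and edges of a face.\<close>
definition face_vertices :: "('v \<times> 'v) set \<Rightarrow> 'v set" where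
  "face_vertices f = fst ` f"

definition face_edges :: "('v \<times> 'v) set \<Rightarrow> 'v set set" where
  "face_edges f = {{u, v} | u v. (u, v) \<in> f}"

definition plane_embedding :: "'v set \<Rightarrow> ('v \<Rightarrow> 'v \<Rightarrow> bool) \<Rightarrow> ('v \<Rightarrow> 'v \<Rightarrow> 'v) \<Rightarrow> bool" where
  "plane_embedding V adj rot \<longleftrightarrow> rotation_system V adj rot \<and>
     int (card V) - int (card (graph_edges adj)) + int (card (faces adj rot)) = 2"

definition fullerene :: "'v set \<Rightarrow> ('v \<Rightarrow> 'v \<Rightarrow> bool) \<Rightarrow> ('v \<Rightarrow> 'v \<Rightarrow> 'v) \<Rightarrow> bool" where
  "fullerene V adj rot \<longleftrightarrow> simple_graph V adj \<and> connected_graph V adj \<and> cubic V adj \<and>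
     plane_embedding V adj rot \<and> (\<forall>f\<in>faces adj rot. card f = 5 \<or> card f = 6)"

definition pentagonal_faces :: "('v \<Rightarrow> 'v \<Rightarrow> bool) \<Rightarrow> ('v \<Rightarrow> 'v \<Rightarrow> 'v) \<Rightarrow> ('v \<times> 'v) set set" where
  "pentagonal_faces adj rot = {f \<in> faces adj rot. card f = 5}"

text \<open>Perfect star packing: a spanning subgraph (edge relation S \<le> adj, symmetric) every
component of which is a K_{1,3}: each vertex v lies in a set {c,x,y,z} of four distinct
vertices whose incident S-edges are exactly cx, cy, cz (so this set is the component of v
in (V,S) and it is a star with centre c).\<close>
definition perfect_star_packing ::
  "'v set \<Rightarrow> ('v \<Rightarrow> 'v \<Rightarrow> bool) \<Rightarrow> ('v \<Rightarrow> 'v \<Rightarrow> bool) \<Rightarrow> bool" where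
  "perfect_star_packing V adj S \<longleftrightarrow>
     (\<forall>u v. S u v \<longrightarrow> adj u v \<and> S v u) \<and>
     (\<forall>v\<in>V. \<exists>c x y z. distinct [c, x, y, z] \<and> v \<in> {c, x, y, z} \<and>
        {{a, b} | a b. S a b \<and> a \<in> {c, x, y, z}} = {{c, x}, {c, y}, {c, z}})"

definition star_centers :: "'v set \<Rightarrow> ('v \<Rightarrow> 'v \<Rightarrow> bool) \<Rightarrow> 'v set" where
  "star_centers V S = {v \<in> V. card {u. S v u} = 3}"

definition type_P0 ::
  "'v set \<Rightarrow> ('v \<Rightarrow> 'v \<Rightarrow> bool) \<Rightarrow> ('v \<Rightarrow> 'v \<Rightarrow> 'v) \<Rightarrow> ('v \<Rightarrow> 'v \<Rightarrow> bool) \<Rightarrow> bool" where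
  "type_P0 V adj rot S \<longleftrightarrow>
     (\<forall>f\<in>pentagonal_faces adj rot. face_vertices f \<inter> star_centers V S = {})"

definition is_cycle :: "'v set \<Rightarrow> ('v \<Rightarrow> 'v \<Rightarrow> bool) \<Rightarrow> 'v list \<Rightarrow> bool" where
  "is_cycle V adj cs \<longleftrightarrow> length cs \<ge> 3 \<and> distinct cs \<and> set cs \<subseteq> V \<and>
     (\<forall>i < length cs. adj (cs ! i) (cs ! ((i + 1) mod length cs)))"

definition cycle_edges :: "'v list \<Rightarrow> 'v set set" where
  "cycle_edges cs = {{cs ! i, cs ! ((i + 1) mod length cs)} | i. i < length cs}"

definition facial_cycle :: "('v \<Rightarrow> 'v \<Rightarrow> bool) \<Rightarrow> ('v \<Rightarrow> 'v \<Rightarrow> 'v) \<Rightarrow> 'v list \<Rightarrow> bool" where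
  "facial_cycle adj rot cs \<longleftrightarrow> (\<exists>f\<in>faces adj rot. cycle_edges cs = face_edges f)"

end

theory Submission
  imports Defs
begin


lemma funpow_inj_back:
  assumes inj: "inj_on f A" and cl: "f ` A \<subseteq> A" and x: "x \<in> A"
  shows "(f ^^ (a + k)) x = (f ^^ (b + k)) x \<Longrightarrow> (f ^^ a) x = (f ^^ b) x"
proof (induction k)
  case 0 then show ?case by simp
next
  case (Suc k)
  have inA: "\<And>n. (f ^^ n) x \<in> A"
  proof -
    fix n show "(f ^^ n) x \<in> A" by (induction n) (use x cl in auto)
  qed
  have "f ((f ^^ (a + k)) x) = f ((f ^^ (b + k)) x)" using Suc.prems by simp
  then have "(f ^^ (a + k)) x = (f ^^ (b + k)) x" using inj inA by (meson inj_on_def)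
  then show ?case using Suc.IH by simp
qed

lemma orbit_card_period:
  assumes fin: "finite A" and inj: "inj_on f A" and cl: "f ` A \<subseteq> A" and x: "x \<in> A"
  shows "(f ^^ card {(f ^^ n) x | n. True}) x = x"
proof -
  define g where "g n = (f ^^ n) x" for n
  have inA: "g n \<in> A" for n unfolding g_def by (induction n) (use x cl in auto)
  have "\<not> inj g"
  proof
    assume "inj g"
    then have "infinite (range g)" using finite_imageD infinite_UNIV_nat by blast
    moreover have "range g \<subseteq> A" using inA by auto
    ultimately show False using fin finite_subset by blast
  qed
  then obtain a b where ab: "g a = g b" "a < b" unfolding inj_def by (metis linorder_neqE_nat)
  have "g 0 = g (b - a)"
    using funpow_inj_back[OF inj cl x, of 0 a "b - a"] ab unfolding g_def by (simp add: add.commute)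
  then have ex: "\<exists>p. 0 < p \<and> g p = x" using ab by (intro exI[of _ "b - a"]) (simp add: g_def)
  define p where "p = (LEAST p. 0 < p \<and> g p = x)"
  have p: "0 < p" "g p = x" using LeastI_ex[OF ex] unfolding p_def by auto
  have pmin: "\<And>q. 0 < q \<Longrightarrow> q < p \<Longrightarrow> g q \<noteq> x" using not_less_Least unfolding p_def by blast
  have per: "g (m + p * k) = g m" for m k
  proof (induction k)
    case 0 then show ?case by simp
  next
    case (Suc k)
    have "g (m + p * Suc k) = (f ^^ (m + p * k)) (g p)" unfolding g_def
      by (metis (no_types, lifting) add.assoc add.commute comp_apply funpow_add mult_Suc_right)
    also have "\<dots> = g (m + p * k)" using p unfolding g_def by simp
    finally show ?case using Suc by simp
  qed
  have orb: "{(f ^^ n) x | n. True} = g ` {..<p}"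
  proof (rule set_eqI, rule iffI)
    fix y assume "y \<in> {(f ^^ n) x | n. True}"
    then obtain n where "y = g n" unfolding g_def by auto
    moreover have "g n = g (n mod p)" using per[of "n mod p" "n div p"] by simp
    ultimately show "y \<in> g ` {..<p}" using p by auto
  next
    fix y assume "y \<in> g ` {..<p}" then show "y \<in> {(f ^^ n) x | n. True}" unfolding g_def by auto
  qed
  have "inj_on g {..<p}"
  proof (rule inj_onI)
    fix a b assume a: "a \<in> {..<p}" and b: "b \<in> {..<p}" and e: "g a = g b"
    show "a = b"
    proof (rule ccontr)
      assume "a \<noteq> b"
      then consider "a < b" | "b < a" by linarith
      then show False
      proof cases
        case 1
        have "g 0 = g (b - a)"
          using funpow_inj_back[OF inj cl x, of 0 a "b - a"] e 1 unfolding g_def by (simp add: add.commute)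
        then show False using pmin[of "b - a"] 1 b by (simp add: g_def) linarith
      next
        case 2
        have "g 0 = g (a - b)"
          using funpow_inj_back[OF inj cl x, of 0 b "a - b"] e 2 unfolding g_def by (simp add: add.commute)
        then show False using pmin[of "a - b"] 2 a by (simp add: g_def) linarith
      qed
    qed
  qed
  then have "card {(f ^^ n) x | n. True} = p" using orb card_image by fastforce
  then show ?thesis using p unfolding g_def by simp
qed



locale fl =
  fixes V :: "'v set" and adj :: "'v \<Rightarrow> 'v \<Rightarrow> bool" and rot :: "'v \<Rightarrow> 'v \<Rightarrow> 'v"
    and S :: "'v \<Rightarrow> 'v \<Rightarrow> bool"
  assumes full: "fullerene V adj rot"
    and psp: "perfect_star_packing V adj S"
    and p0: "type_P0 V adj rot S"
begin

abbreviation "C \<equiv> star_centers V S"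
abbreviation "N \<equiv> neighbours adj"

lemma sg: "simple_graph V adj" using full unfolding fullerene_def by auto

lemma adjD: "adj u v \<Longrightarrow> u \<in> V \<and> v \<in> V \<and> adj v u \<and> u \<noteq> v"
  using sg unfolding simple_graph_def by blast

lemma finV: "finite V" using sg unfolding simple_graph_def by auto

lemma N_iff: "u \<in> N v \<longleftrightarrow> adj v u" unfolding neighbours_def by auto

lemma cardN: "v \<in> V \<Longrightarrow> card (N v) = 3"
  using full unfolding fullerene_def cubic_def by auto

lemma finN: "finite (N v)"
proof -
  have "N v \<subseteq> V" using adjD unfolding neighbours_def by auto
  then show ?thesis using finV finite_subset by blast
qed

lemma rs: "rotation_system V adj rot"
  using full unfolding fullerene_def plane_embedding_def by auto

lemma rot_bij: "v \<in> V \<Longrightarrow> bij_betw (rot v) (N v) (N v)"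
  using rs unfolding rotation_system_def by auto

lemma rot_in: "v \<in> V \<Longrightarrow> u \<in> N v \<Longrightarrow> rot v u \<in> N v"
  using rot_bij bij_betwE by blast

lemma rot_inj: "v \<in> V \<Longrightarrow> u \<in> N v \<Longrightarrow> w \<in> N v \<Longrightarrow> rot v u = rot v w \<Longrightarrow> u = w"
  using rot_bij unfolding bij_betw_def inj_on_def by blast

lemma rot_nofix: assumes "v \<in> V" "u \<in> N v" shows "rot v u \<noteq> u"
proof
  assume fx: "rot v u = u"
  have "N v \<noteq> {u}" using cardN[OF assms(1)] by auto
  then obtain w where w: "w \<in> N v" "w \<noteq> u" using assms(2) by blast
  then obtain k where "(rot v ^^ k) u = w" using rs assms unfolding rotation_system_def by blast
  moreover have "(rot v ^^ k) u = u" for k using fx by (induction k) auto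
  ultimately show False using w by simp
qed

lemma rot3:
  assumes v: "v \<in> V" and Nv: "N v = {a, b, c}" and d: "a \<noteq> b" "a \<noteq> c" "b \<noteq> c"
  shows "(rot v a = b \<and> rot v b = c \<and> rot v c = a) \<or> (rot v a = c \<and> rot v c = b \<and> rot v b = a)"
proof -
  have inN: "a \<in> N v" "b \<in> N v" "c \<in> N v" using Nv by auto
  have ra: "rot v a \<in> {a,b,c}" "rot v b \<in> {a,b,c}" "rot v c \<in> {a,b,c}"
    using rot_in[OF v] inN Nv by auto
  have nf: "rot v a \<noteq> a" "rot v b \<noteq> b" "rot v c \<noteq> c" using rot_nofix[OF v] inN by auto
  have ij: "rot v a \<noteq> rot v b" "rot v a \<noteq> rot v c" "rot v b \<noteq> rot v c"
    using rot_inj[OF v inN(1) inN(2)] rot_inj[OF v inN(1) inN(3)] rot_inj[OF v inN(2) inN(3)] d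
    by auto
  have A: "rot v a = b \<or> rot v a = c" using ra(1) nf(1) by auto
  have B: "rot v b = a \<or> rot v b = c" using ra(2) nf(2) by auto
  have Cc: "rot v c = a \<or> rot v c = b" using ra(3) nf(3) by auto
  show ?thesis using A B Cc ij by auto
qed

lemma adj_sym: "adj u v \<Longrightarrow> adj v u" using adjD by blast

lemma S_adj: "S u v \<Longrightarrow> adj u v" using psp unfolding perfect_star_packing_def by blast
lemma S_sym: "S u v \<Longrightarrow> S v u" using psp unfolding perfect_star_packing_def by blast

lemma star_struct:
  assumes v: "v \<in> V"
  shows "(card {u. S v u} = 3 \<and> (\<forall>u. S v u \<longrightarrow> card {w. S u w} = 1)) \<or>
         (\<exists>c. {u. S v u} = {c} \<and> card {u. S c u} = 3)"
proof -
  obtain c x y z where dst: "distinct [c, x, y, z]" and vin: "v \<in> {c, x, y, z}"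
    and E: "{{a, b} | a b. S a b \<and> a \<in> {c, x, y, z}} = {{c, x}, {c, y}, {c, z}}"
  proof -
    have "\<forall>v\<in>V. \<exists>c x y z. distinct [c, x, y, z] \<and> v \<in> {c, x, y, z} \<and>
        {{a, b} | a b. S a b \<and> a \<in> {c, x, y, z}} = {{c, x}, {c, y}, {c, z}}"
      using psp unfolding perfect_star_packing_def by (rule conjunct2)
    then have "\<exists>c x y z. distinct [c, x, y, z] \<and> v \<in> {c, x, y, z} \<and>
        {{a, b} | a b. S a b \<and> a \<in> {c, x, y, z}} = {{c, x}, {c, y}, {c, z}}"
      using v by (rule bspec)
    then show ?thesis using that by (elim exE conjE) 
  qed
  have Sirr: "S a b \<Longrightarrow> a \<noteq> b" for a b using S_adj adjD by blast
  have memE: "{a,b} \<in> {{c, x}, {c, y}, {c, z}}" if "S a b" "a \<in> {c,x,y,z}" for a b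
  proof -
    have "{a,b} \<in> {{a, b} | a b. S a b \<and> a \<in> {c, x, y, z}}" using that by blast
    then show ?thesis by (simp only: E)
  qed
  have Sc: "{u. S c u} = {x,y,z}"
  proof (rule set_eqI, rule iffI)
    fix u assume "u \<in> {u. S c u}"
    then have Scu: "S c u" by simp
    then have "{c,u} \<in> {{c, x}, {c, y}, {c, z}}" using memE by simp
    then have "{c,u} = {c,x} \<or> {c,u} = {c,y} \<or> {c,u} = {c,z}" by simp
    moreover have "u \<noteq> c" using Sirr Scu by blast
    ultimately show "u \<in> {x,y,z}" by (auto simp: doubleton_eq_iff)
  next
    fix u assume u: "u \<in> {x,y,z}"
    then have "{c,u} \<in> {{c, x}, {c, y}, {c, z}}" by auto
    then have "{c,u} \<in> {{a, b} | a b. S a b \<and> a \<in> {c, x, y, z}}" by (simp only: E)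
    then obtain a b where ab: "{c,u} = {a,b}" "S a b" by blast
    then have "(c = a \<and> u = b) \<or> (c = b \<and> u = a)" by (simp add: doubleton_eq_iff)
    then show "u \<in> {u. S c u}" using S_sym ab(2) by auto
  qed
  have cardc: "card {u. S c u} = 3" using Sc dst by simp
  have leaf: "{w. S u w} = {c}" if u: "u \<in> {x,y,z}" for u
  proof (rule set_eqI, rule iffI)
    fix w assume "w \<in> {w. S u w}"
    then have "S u w" by simp
    then have "{u,w} \<in> {{c, x}, {c, y}, {c, z}}" using memE u by simp
    then have "{u,w} = {c,x} \<or> {u,w} = {c,y} \<or> {u,w} = {c,z}" by simp
    moreover have "u \<noteq> c" using u dst by auto
    moreover have "u = x \<or> u = y \<or> u = z" using u by simp
    ultimately show "w \<in> {c}" using dst by (auto simp: doubleton_eq_iff)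
  next
    fix w assume "w \<in> {c}"
    then show "w \<in> {w. S u w}" using Sc u S_sym by auto
  qed
  have cardl: "card {w. S u w} = 1" if "u \<in> {x,y,z}" for u using leaf[OF that] by simp
  show ?thesis
  proof (cases "v = c")
    case True
    have "\<forall>u. S v u \<longrightarrow> card {w. S u w} = 1" using cardl Sc True by blast
    then show ?thesis using cardc True by blast
  next
    case False
    then have "v \<in> {x,y,z}" using vin by auto
    then show ?thesis using leaf cardc by blast
  qed
qed

lemma center_N: assumes c: "c \<in> C" and a: "adj c u" shows "S c u"
proof -
  have cV: "c \<in> V" and cc: "card {u. S c u} = 3" using c unfolding star_centers_def by auto
  have sub: "{u. S c u} \<subseteq> N c" using S_adj unfolding neighbours_def by auto
  have "{u. S c u} = N c"
    using card_subset_eq[OF finN sub] cc cardN[OF cV] by simp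
  then show ?thesis using a unfolding neighbours_def by auto
qed

lemma K2: assumes c: "c \<in> C" and a: "adj c u" shows "u \<notin> C"
proof
  assume u: "u \<in> C"
  have cV: "c \<in> V" and cc: "card {u. S c u} = 3" using c unfolding star_centers_def by auto
  have uc: "card {w. S u w} = 3" using u unfolding star_centers_def by auto
  have "S c u" using center_N[OF c a] .
  from star_struct[OF cV] show False
  proof
    assume "card {u. S c u} = 3 \<and> (\<forall>u. S c u \<longrightarrow> card {w. S u w} = 1)"
    then show False using \<open>S c u\<close> uc by simp
  next
    assume "\<exists>c'. {u. S c u} = {c'} \<and> card {u. S c' u} = 3"
    then show False using cc by auto
  qed
qed

lemma K3: assumes c1: "c1 \<in> C" and c2: "c2 \<in> C" and a1: "adj w c1" and a2: "adj w c2"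
  shows "c1 = c2"
proof -
  have s1: "S w c1" using center_N[OF c1 adj_sym[OF a1]] S_sym by blast
  have s2: "S w c2" using center_N[OF c2 adj_sym[OF a2]] S_sym by blast
  have wV: "w \<in> V" using adjD a1 by blast
  have "w \<notin> C" using K2[OF c1 adj_sym[OF a1]] .
  then have "card {u. S w u} \<noteq> 3" using wV unfolding star_centers_def by auto
  then obtain c where c: "{u. S w u} = {c}" using star_struct[OF wV] by blast
  have "c1 \<in> {u. S w u}" "c2 \<in> {u. S w u}" using s1 s2 by auto
  then show ?thesis unfolding c by simp
qed

lemma K1: assumes v: "v \<in> V" and nc: "v \<notin> C" shows "\<exists>c. c \<in> C \<and> adj v c"
proof -
  have "card {u. S v u} \<noteq> 3" using v nc unfolding star_centers_def by auto
  then obtain c where c: "{u. S v u} = {c}" "card {u. S c u} = 3" using star_struct[OF v] by blast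
  then have "S v c" by auto
  then have "adj v c" "c \<in> V" using S_adj adjD by blast+
  then show ?thesis using c unfolding star_centers_def by auto
qed

lemma darts_iff: "d \<in> darts adj \<longleftrightarrow> adj (fst d) (snd d)" unfolding darts_def by auto

lemma fs_simp: "face_step rot (a, b) = (b, rot b a)" unfolding face_step_def by simp

lemma fs_darts: "d \<in> darts adj \<Longrightarrow> face_step rot d \<in> darts adj"
proof -
  assume d: "d \<in> darts adj"
  obtain a b where ab: "d = (a,b)" by (cases d)
  then have "adj a b" using d darts_iff by simp
  then have "b \<in> V" "a \<in> N b" using adjD N_iff by blast+
  then have "rot b a \<in> N b" using rot_in by blast
  then show ?thesis using ab darts_iff N_iff fs_simp by simp
qed

lemma fs_inj: "inj_on (face_step rot) (darts adj)"
proof (rule inj_onI)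
  fix d e assume d: "d \<in> darts adj" and e: "e \<in> darts adj" and eq: "face_step rot d = face_step rot e"
  obtain a b where ab: "d = (a,b)" by (cases d)
  obtain a' b' where ab': "e = (a',b')" by (cases e)
  have bb: "b = b'" and r: "rot b a = rot b' a'" using eq ab ab' fs_simp by auto
  have "adj a b" "adj a' b'" using d e ab ab' darts_iff by auto
  then have "b \<in> V" "a \<in> N b" "a' \<in> N b" using adjD N_iff bb by blast+
  then have "a = a'" using rot_inj r bb by blast
  then show "d = e" using ab ab' bb by simp
qed

lemma fin_darts: "finite (darts adj)"
proof -
  have "darts adj \<subseteq> V \<times> V" unfolding darts_def using adjD by auto
  then show ?thesis using finV finite_subset by blast
qed

lemma period6:
  assumes d: "d \<in> darts adj" and k: "fst ((face_step rot ^^ k) d) \<in> C"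
  shows "(face_step rot ^^ 6) d = d"
proof -
  define f where "f = face_of rot d"
  have ff: "f \<in> faces adj rot" unfolding f_def faces_def using d by auto
  then have c56: "card f = 5 \<or> card f = 6" using full unfolding fullerene_def by auto
  have "fst ((face_step rot ^^ k) d) \<in> face_vertices f"
    unfolding face_vertices_def f_def face_of_def by blast
  then have "card f \<noteq> 5" using p0 ff k unfolding type_P0_def pentagonal_faces_def by blast
  then have c6: "card f = 6" using c56 by simp
  have "(face_step rot ^^ card {(face_step rot ^^ n) d | n. True}) d = d"
    using orbit_card_period[OF fin_darts fs_inj _ d] fs_darts by blast
  then show ?thesis using c6 unfolding f_def face_of_def by simp
qed

end



locale cyc = fl +
  fixes cs
  assumes cyc: "is_cycle V adj cs" and ncs: "set cs \<inter> star_centers V S = {}"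
begin

definition "l = length cs"
definition "v n = cs ! (n mod l)"
definition "P n = v (n + (l - 1))"
definition "cn n = (SOME c. c \<in> C \<and> adj (v n) c)"
definition "s n = (rot (v n) (P n) = v (Suc n))"

lemma l3: "l \<ge> 3" using cyc unfolding is_cycle_def l_def by auto
lemma dist: "distinct cs" using cyc unfolding is_cycle_def by auto

lemma lpos: "0 < length cs" using l3 unfolding l_def by (cases cs) auto
lemma v_in: "v n \<in> set cs" unfolding v_def l_def using lpos by simp
lemma vV: "v n \<in> V" using v_in cyc unfolding is_cycle_def by auto
lemma v_nc: "v n \<notin> C" using v_in ncs by auto

lemma v_add_mult: "v (m + k * l) = v m" unfolding v_def by simp
lemma v_add: "v (m + l) = v m" using v_add_mult[of m 1] by simp
lemma v_mod: "v (n mod l) = v n" unfolding v_def by simp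

lemma P_Suc: "P (Suc n) = v n"
proof -
  have "Suc n + (l - 1) = n + l" using l3 by simp
  then show ?thesis unfolding P_def using v_add by simp
qed

lemma adj_next: "adj (v n) (v (Suc n))"
proof -
  have "n mod l < length cs" using lpos l_def by simp
  then have "adj (cs ! (n mod l)) (cs ! ((n mod l + 1) mod length cs))"
    using cyc unfolding is_cycle_def by blast
  then show ?thesis unfolding v_def l_def by (simp add: mod_Suc_eq)
qed

lemma adj_prev: "adj (v n) (P n)"
proof -
  have "Suc (n + (l - 1)) = n + l" using l3 by simp
  then have "adj (P n) (v (n + l))" using adj_next[of "n + (l - 1)"] unfolding P_def by simp
  then show ?thesis using v_add adj_sym by simp
qed

lemma cn: "cn n \<in> C \<and> adj (v n) (cn n)"
proof -
  have "\<exists>c. c \<in> C \<and> adj (v n) c" using K1[OF vV v_nc] .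
  then show ?thesis unfolding cn_def by (rule someI_ex)
qed

lemma P_ne_next: "P n \<noteq> v (Suc n)"
proof
  assume e: "P n = v (Suc n)"
  have l: "l = length cs" by (simp add: l_def)
  have i1: "(n + (l - 1)) mod l < length cs" "Suc n mod l < length cs" using lpos l by auto
  have "(n + (l - 1)) mod l = Suc n mod l"
    using e nth_eq_iff_index_eq[OF dist i1] unfolding P_def v_def l[symmetric] by simp
  then have "(n + (l - 1) + 2) mod l = (Suc n + 2) mod l" by (metis mod_add_left_eq)
  moreover have "n + (l - 1) + 2 = Suc n + l" using l3 by simp
  moreover have "(Suc n + l) mod l = Suc n mod l" by (rule mod_add_self2)
  ultimately have "(Suc n + 2) mod l = Suc n mod l" by metis
  then have "l dvd (Suc n + 2) - Suc n" using mod_eq_dvd_iff_nat[of "Suc n" "Suc n + 2" l] by simp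
  then have "l dvd 2" by simp
  then have "l \<le> 2" by (rule dvd_imp_le) simp
  then show False using l3 by simp
qed

lemma NV: "N (v n) = {P n, v (Suc n), cn n}"
  and dist3: "P n \<noteq> v (Suc n)" "P n \<noteq> cn n" "v (Suc n) \<noteq> cn n"
proof -
  show d1: "P n \<noteq> v (Suc n)" by (rule P_ne_next)
  have "P n \<notin> C" unfolding P_def using v_nc .
  then show d2: "P n \<noteq> cn n" using cn by auto
  show d3: "v (Suc n) \<noteq> cn n" using cn v_nc by metis
  have sub: "{P n, v (Suc n), cn n} \<subseteq> N (v n)" using adj_prev adj_next cn N_iff by auto
  have "card {P n, v (Suc n), cn n} = 3" using d1 d2 d3 by simp
  then show "N (v n) = {P n, v (Suc n), cn n}"
    using card_subset_eq[OF finN sub] cardN[OF vV] by simp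
qed

lemma rot_s: "s n \<Longrightarrow> rot (v n) (P n) = v (Suc n) \<and> rot (v n) (v (Suc n)) = cn n \<and> rot (v n) (cn n) = P n"
  using rot3[OF vV[of n] NV[of n] dist3(1)[of n] dist3(2)[of n] dist3(3)[of n]] dist3(2)[of n] unfolding s_def by auto

lemma rot_ns: "\<not> s n \<Longrightarrow> rot (v n) (P n) = cn n \<and> rot (v n) (cn n) = v (Suc n) \<and> rot (v n) (v (Suc n)) = P n"
  using rot3[OF vV[of n] NV[of n] dist3(1)[of n] dist3(2)[of n] dist3(3)[of n]] unfolding s_def by auto

lemma nofix: "adj w u \<Longrightarrow> rot w u \<noteq> u"
  using rot_nofix adjD N_iff by blast

lemma rot_adj: "adj w u \<Longrightarrow> adj w (rot w u)"
  using rot_in adjD N_iff by blast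

lemma fs6: "(face_step rot ^^ 6) d = face_step rot (face_step rot (face_step rot (face_step rot (face_step rot (face_step rot d)))))"
  by (simp add: eval_nat_numeral)

lemma s_per: "s (n + l) = s n"
proof -
  have "P (n + l) = P n" unfolding P_def using v_add by (metis add.assoc add.commute)
  moreover have "v (Suc (n + l)) = v (Suc n)" using v_add by (metis add_Suc)
  ultimately show ?thesis unfolding s_def using v_add by simp
qed

lemma s_per_mult: "s (n + k * l) = s n"
proof (induction k)
  case 0 then show ?case by simp
next
  case (Suc k)
  have "s (n + Suc k * l) = s (n + k * l + l)" by (simp add: algebra_simps)
  then show ?case using s_per Suc by simp
qed

end



context cyc begin

lemma fwd:
  assumes a: "\<not> s i" and b: "s (Suc i)"
  shows "s (Suc (Suc i)) \<and> s (Suc (Suc (Suc i))) \<and> \<not> s (Suc (Suc (Suc (Suc i))))"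
proof -
  let ?f = "face_step rot"
  let ?i1 = "Suc i" let ?i2 = "Suc (Suc i)" let ?i3 = "Suc (Suc (Suc i))"
  let ?i4 = "Suc (Suc (Suc (Suc i)))"
  define d0 where "d0 = (cn i, v i)"
  have d0D: "d0 \<in> darts adj" using cn adj_sym darts_iff d0_def by auto
  have per: "(?f ^^ 6) d0 = d0" using period6[OF d0D, of 0] cn d0_def by simp
  have e1: "?f d0 = (v i, v ?i1)" using rot_ns[OF a] d0_def fs_simp by simp
  have e2: "?f (v i, v ?i1) = (v ?i1, v ?i2)" using rot_s[OF b] P_Suc[of i] fs_simp by simp
  have s2: "s ?i2"
  proof (rule ccontr)
    assume n2: "\<not> s ?i2"
    have e3: "?f (v ?i1, v ?i2) = (v ?i2, cn ?i2)" using rot_ns[OF n2] P_Suc[of ?i1] fs_simp by simp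
    define w where "w = rot (cn ?i2) (v ?i2)"
    define x where "x = rot w (cn ?i2)"
    have e4: "?f (v ?i2, cn ?i2) = (cn ?i2, w)" using fs_simp w_def by simp
    have e5: "?f (cn ?i2, w) = (w, x)" using fs_simp x_def by simp
    have e6: "?f (w, x) = (x, rot x w)" using fs_simp by simp
    have "(x, rot x w) = d0" using per e1 e2 e3 e4 e5 e6 fs6 by simp
    then have xc: "x = cn i" using d0_def by simp
    have aw: "adj (cn ?i2) w" using rot_adj cn adj_sym w_def by blast
    have ax: "adj w x" using rot_adj adj_sym[OF aw] x_def by blast
    have "cn i = cn ?i2" using K3[of "cn i" "cn ?i2" w] cn xc ax adj_sym[OF aw] by auto
    then have "x = cn ?i2" using xc by simp
    then show False using nofix[OF adj_sym[OF aw]] x_def by simp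
  qed
  have e3: "?f (v ?i1, v ?i2) = (v ?i2, v ?i3)" using rot_s[OF s2] P_Suc[of ?i1] fs_simp by simp
  have s3: "s ?i3"
  proof (rule ccontr)
    assume n3: "\<not> s ?i3"
    have e4: "?f (v ?i2, v ?i3) = (v ?i3, cn ?i3)" using rot_ns[OF n3] P_Suc[of ?i2] fs_simp by simp
    define w where "w = rot (cn ?i3) (v ?i3)"
    have e5: "?f (v ?i3, cn ?i3) = (cn ?i3, w)" using fs_simp w_def by simp
    have e6: "?f (cn ?i3, w) = (w, rot w (cn ?i3))" using fs_simp by simp
    have "(w, rot w (cn ?i3)) = d0" using per e1 e2 e3 e4 e5 e6 fs6 by simp
    then have wc: "w = cn i" using d0_def by simp
    have aw: "adj (cn ?i3) w" using rot_adj cn adj_sym w_def by blast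
    then show False using K2[of "cn ?i3" w] cn wc by auto
  qed
  have e4: "?f (v ?i2, v ?i3) = (v ?i3, v ?i4)" using rot_s[OF s3] P_Suc[of ?i2] fs_simp by simp
  have s4: "\<not> s ?i4"
  proof
    assume y4: "s ?i4"
    have e5: "?f (v ?i3, v ?i4) = (v ?i4, v (Suc ?i4))" using rot_s[OF y4] P_Suc[of ?i3] fs_simp by simp
    have e6: "?f (v ?i4, v (Suc ?i4)) = (v (Suc ?i4), rot (v (Suc ?i4)) (v ?i4))" using fs_simp by simp
    have "(v (Suc ?i4), rot (v (Suc ?i4)) (v ?i4)) = d0" using per e1 e2 e3 e4 e5 e6 fs6 by simp
    then have "v (Suc ?i4) = cn i" using d0_def by simp
    then show False using v_nc cn by metis
  qed
  show ?thesis using s2 s3 s4 by simp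
qed

lemma mir:
  assumes a: "s j" and b: "\<not> s (Suc j)"
  shows "\<not> s (Suc (Suc j)) \<and> \<not> s (Suc (Suc (Suc j))) \<and> s (Suc (Suc (Suc (Suc j))))"
proof -
  let ?f = "face_step rot"
  let ?j1 = "Suc j" let ?j2 = "Suc (Suc j)" let ?j3 = "Suc (Suc (Suc j))"
  let ?j4 = "Suc (Suc (Suc (Suc j)))"
  define X where "X = (v ?j2, v ?j1)"
  have XD: "X \<in> darts adj" using adj_prev[of ?j2] P_Suc[of ?j1] darts_iff X_def by simp
  have e1: "?f X = (v ?j1, v j)" using rot_ns[OF b] P_Suc[of j] fs_simp X_def by simp
  have e2: "?f (v ?j1, v j) = (v j, cn j)" using rot_s[OF a] fs_simp by simp
  define w where "w = rot (cn j) (v j)"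
  define x where "x = rot w (cn j)"
  define y where "y = rot x w"
  have e3: "?f (v j, cn j) = (cn j, w)" using fs_simp w_def by simp
  have e4: "?f (cn j, w) = (w, x)" using fs_simp x_def by simp
  have e5: "?f (w, x) = (x, y)" using fs_simp y_def by simp
  have e6: "?f (x, y) = (y, rot y x)" using fs_simp by simp
  have "fst ((?f ^^ 3) X) = cn j" using e1 e2 e3 by (simp add: eval_nat_numeral)
  then have per: "(?f ^^ 6) X = X" using period6[OF XD, of 3] cn by simp
  have "(y, rot y x) = X" using per e1 e2 e3 e4 e5 e6 fs6 by simp
  then have yv: "y = v ?j2" and ry: "rot (v ?j2) x = v ?j1" using X_def by auto
  have aw: "adj (cn j) w" using rot_adj cn adj_sym w_def by blast
  have ax: "adj w x" using rot_adj adj_sym[OF aw] x_def by blast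
  have ay: "adj x y" using rot_adj adj_sym[OF ax] y_def by blast
  have xN: "x \<in> {v ?j1, v ?j3, cn ?j2}" using NV[of ?j2] P_Suc[of ?j1] ay yv adj_sym N_iff by auto
  have xne: "x \<noteq> v ?j1" using nofix[of "v ?j2" x] ay yv adj_sym ry by auto
  have s2: "\<not> s ?j2"
  proof
    assume y2: "s ?j2"
    have "x \<noteq> v ?j3"
    proof
      assume "x = v ?j3"
      then have "rot (v ?j2) x = cn ?j2" using rot_s[OF y2] by simp
      then show False using ry v_nc cn by metis
    qed
    then have "x = cn ?j2" using xN xne by auto
    then have "cn j = cn ?j2" using K3[of "cn j" "cn ?j2" w] cn ax adj_sym[OF aw] by auto
    then have "rot w (cn j) = cn j" using x_def \<open>x = cn ?j2\<close> by simp
    then show False using nofix[OF adj_sym[OF aw]] by simp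
  qed
  have "x \<noteq> cn ?j2"
  proof
    assume "x = cn ?j2"
    then have "rot (v ?j2) x = v ?j3" using rot_ns[OF s2] by simp
    then show False using ry dist3(1)[of ?j2] P_Suc[of ?j1] by simp
  qed
  then have xv: "x = v ?j3" using xN xne by auto
  have ry3: "rot (v ?j3) w = P ?j3" using y_def yv xv P_Suc[of ?j2] by simp
  have wN: "w \<in> {P ?j3, v ?j4, cn ?j3}" using NV[of ?j3] ax xv adj_sym N_iff by auto
  have wne1: "w \<noteq> P ?j3" using nofix[of "v ?j3" w] ax xv adj_sym ry3 by auto
  have wne2: "w \<noteq> cn ?j3" using K2[of "cn j" w] cn aw by auto
  have wv: "w = v ?j4" using wN wne1 wne2 by auto
  have s3: "\<not> s ?j3"
  proof
    assume "s ?j3"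
    then have "rot (v ?j3) (v ?j4) = cn ?j3" using rot_s by simp
    then show False using ry3 wv dist3(2)[of ?j3] by simp
  qed
  have "cn j = cn ?j4" using K3[of "cn j" "cn ?j4" "v ?j4"] cn aw wv adj_sym by auto
  then have rx: "rot (v ?j4) (cn ?j4) = v ?j3" using x_def xv wv by simp
  have s4: "s ?j4"
  proof (rule ccontr)
    assume "\<not> s ?j4"
    then have "rot (v ?j4) (cn ?j4) = v (Suc ?j4)" using rot_ns by simp
    then show False using rx dist3(1)[of ?j4] P_Suc[of ?j3] by simp
  qed
  show ?thesis using s2 s3 s4 by simp
qed

lemma trans3:
  assumes "s t \<noteq> s (Suc t)"
  shows "s (Suc t) = s (Suc (Suc t)) \<and> s (Suc (Suc t)) = s (Suc (Suc (Suc t))) \<and>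
         s (Suc (Suc (Suc (Suc t)))) \<noteq> s (Suc (Suc (Suc t)))"
proof (cases "s t")
  case True
  then show ?thesis using mir[of t] assms by simp
next
  case False
  then show ?thesis using fwd[of t] assms by simp
qed

end



context cyc begin

lemma ce: "cycle_edges cs = {{v i, v (Suc i)} | i. i < l}"
proof -
  have h: "\<And>i. i < l \<Longrightarrow> {v i, v (Suc i)} = {cs ! i, cs ! ((i + 1) mod length cs)}"
    by (simp add: v_def l_def)
  show ?thesis unfolding cycle_edges_def l_def[symmetric]
  proof (rule set_eqI, rule iffI)
    fix e assume "e \<in> {{cs ! i, cs ! ((i + 1) mod l)} | i. i < l}"
    then obtain i where "i < l" "e = {cs ! i, cs ! ((i + 1) mod l)}" by blast
    then show "e \<in> {{v i, v (Suc i)} | i. i < l}" using h l_def by auto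
  next
    fix e assume "e \<in> {{v i, v (Suc i)} | i. i < l}"
    then obtain i where "i < l" "e = {v i, v (Suc i)}" by blast
    then show "e \<in> {{cs ! i, cs ! ((i + 1) mod l)} | i. i < l}" using h l_def by auto
  qed
qed

lemma vS_mod: "v (Suc (n mod l)) = v (Suc n)"
  unfolding v_def by (simp add: mod_Suc_eq)

lemma all_edges: "{{v n, v (Suc n)} | n. True} = {{v i, v (Suc i)} | i. i < l}"
proof (rule set_eqI, rule iffI)
  fix e assume "e \<in> {{v n, v (Suc n)} | n. True}"
  then obtain n where e: "e = {v n, v (Suc n)}" by blast
  have "n mod l < l" using lpos l_def by simp
  moreover have "e = {v (n mod l), v (Suc (n mod l))}" using e v_mod vS_mod by simp
  ultimately show "e \<in> {{v i, v (Suc i)} | i. i < l}" by blast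
next
  fix e assume "e \<in> {{v i, v (Suc i)} | i. i < l}"
  then show "e \<in> {{v n, v (Suc n)} | n. True}" by blast
qed

lemma all_true:
  assumes "\<forall>n. s n" shows "facial_cycle adj rot cs"
proof -
  let ?f = "face_step rot"
  define d where "d = (v 0, v (Suc 0))"
  have dD: "d \<in> darts adj" using adj_next darts_iff d_def by simp
  have it: "(?f ^^ n) d = (v n, v (Suc n))" for n
  proof (induction n)
    case 0 then show ?case using d_def by simp
  next
    case (Suc n)
    have "?f (v n, v (Suc n)) = (v (Suc n), v (Suc (Suc n)))"
      using rot_s[of "Suc n"] assms P_Suc[of n] fs_simp by simp
    then show ?case using Suc by simp
  qed
  have "face_edges (face_of rot d) = {{v n, v (Suc n)} | n. True}"
    unfolding face_edges_def face_of_def it by blast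
  then have "face_edges (face_of rot d) = cycle_edges cs" using ce all_edges by simp
  moreover have "face_of rot d \<in> faces adj rot" unfolding faces_def using dD by simp
  ultimately show ?thesis unfolding facial_cycle_def by metis
qed

lemma arith1: "i < (l::nat) \<Longrightarrow> (l - i) * (l - 1) = i + (l - i - 1) * l"
proof -
  assume "i < l"
  then obtain m where m: "l = m + i + 1" by (metis add.commute add_Suc less_imp_Suc_add add.right_neutral Suc_eq_plus1 add.assoc)
  then show ?thesis by (simp add: algebra_simps)
qed

lemma all_false:
  assumes "\<forall>n. \<not> s n" shows "facial_cycle adj rot cs"
proof -
  let ?f = "face_step rot"
  define b where "b n = n * (l - 1)" for n
  define d where "d = (v (Suc 0), v 0)"
  have dD: "d \<in> darts adj" using adj_next adj_sym darts_iff d_def by simp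
  have it: "(?f ^^ n) d = (v (Suc (b n)), v (b n))" for n
  proof (induction n)
    case 0 then show ?case using d_def b_def by simp
  next
    case (Suc n)
    have A: "?f (v (Suc (b n)), v (b n)) = (v (b n), P (b n))"
      using rot_ns[of "b n"] assms fs_simp by simp
    have B: "P (b n) = v (b (Suc n))" unfolding P_def b_def mult_Suc by (simp only: add.commute)
    have C: "v (b n) = v (Suc (b (Suc n)))"
    proof -
      obtain m where m: "l = Suc m" using l3 by (cases l) auto
      have "Suc (b (Suc n)) = b n + l" unfolding b_def m by simp
      then show ?thesis using v_add by simp
    qed
    have "?f (v (Suc (b n)), v (b n)) = (v (Suc (b (Suc n))), v (b (Suc n)))"
      using A B C by metis
    then show ?case using Suc by simp
  qed
  have fe: "face_edges (face_of rot d) = {{v (Suc (b n)), v (b n)} | n. True}"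
    unfolding face_edges_def face_of_def it by blast
  have "{{v (Suc (b n)), v (b n)} | n. True} = {{v i, v (Suc i)} | i. i < l}"
  proof (rule set_eqI, rule iffI)
    fix e assume "e \<in> {{v (Suc (b n)), v (b n)} | n. True}"
    then obtain n where e: "e = {v (Suc (b n)), v (b n)}" by blast
    have "b n mod l < l" using lpos l_def by simp
    moreover have "e = {v (b n mod l), v (Suc (b n mod l))}" using e v_mod vS_mod by auto
    ultimately show "e \<in> {{v i, v (Suc i)} | i. i < l}" by blast
  next
    fix e assume "e \<in> {{v i, v (Suc i)} | i. i < l}"
    then obtain i where i: "i < l" and e: "e = {v i, v (Suc i)}" by blast
    have bi: "b (l - i) = i + (l - i - 1) * l" unfolding b_def using arith1[OF i] .
    have "v (b (l - i)) = v i" using bi v_add_mult by simp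
    moreover have "v (Suc (b (l - i))) = v (Suc i)" using bi v_add_mult[of "Suc i"] by simp
    ultimately have "e = {v (Suc (b (l - i))), v (b (l - i))}" using e by auto
    then show "e \<in> {{v (Suc (b n)), v (b n)} | n. True}" by blast
  qed
  then have "face_edges (face_of rot d) = cycle_edges cs" using ce fe by simp
  moreover have "face_of rot d \<in> faces adj rot" unfolding faces_def using dD by simp
  ultimately show ?thesis unfolding facial_cycle_def by metis
qed

lemma no_odd:
  assumes odd: "odd l" and nf: "\<not> facial_cycle adj rot cs"
  shows False
proof (cases "\<forall>t. s (Suc t) = s t")
  case True
  have const: "s n = s 0" for n by (induction n) (use True in auto)
  show False
  proof (cases "s 0")
    case True
    then show False using all_true const nf by simp
  next
    case False
    then show False using all_false const nf by simp
  qed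
next
  case False
  then obtain t0 where t0: "s t0 \<noteq> s (Suc t0)" by auto
  have claim: "s (t0 + 3 * k) \<noteq> s (Suc (t0 + 3 * k)) \<and>
      s (Suc (t0 + 3 * k)) = (if even k then s (Suc t0) else \<not> s (Suc t0))" for k
  proof (induction k)
    case 0 then show ?case using t0 by simp
  next
    case (Suc k)
    define t where "t = t0 + 3 * k"
    have tr: "s t \<noteq> s (Suc t)" and ev: "s (Suc t) = (if even k then s (Suc t0) else \<not> s (Suc t0))"
      using Suc t_def by auto
    have h: "t0 + 3 * Suc k = Suc (Suc (Suc t))" using t_def by simp
    show ?case unfolding h using trans3[OF tr] ev by auto
  qed
  have "s (Suc (t0 + 3 * l)) = s (Suc t0)"
    using s_per_mult[of "Suc t0" 3] by (simp add: algebra_simps)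
  moreover have "s (Suc (t0 + 3 * l)) = (\<not> s (Suc t0))" using claim[of l] odd by simp
  ultimately show False by simp
qed

end


theorem mainTheorem13:
  fixes V :: "'v set" and adj :: "'v \<Rightarrow> 'v \<Rightarrow> bool" and rot :: "'v \<Rightarrow> 'v \<Rightarrow> 'v"
    and S :: "'v \<Rightarrow> 'v \<Rightarrow> bool"
  assumes "fullerene V adj rot"
    and "perfect_star_packing V adj S"
    and "type_P0 V adj rot S"
  shows "\<not> (\<exists>cs. is_cycle V adj cs \<and> set cs \<inter> star_centers V S = {} \<and>
               odd (length cs) \<and> \<not> facial_cycle adj rot cs)"
proof
  assume "\<exists>cs. is_cycle V adj cs \<and> set cs \<inter> star_centers V S = {} \<and>
               odd (length cs) \<and> \<not> facial_cycle adj rot cs"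
  then obtain cs where c1: "is_cycle V adj cs" and c2: "set cs \<inter> star_centers V S = {}"
    and c3: "odd (length cs)" and c4: "\<not> facial_cycle adj rot cs" by blast
  interpret c: cyc V adj rot S cs
    using assms c1 c2 by (unfold_locales) auto
  show False using c.no_odd c3 c4 c.l_def by simp
qed

end
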